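(* In the two-bidder, two-configuration asymmetric setting below, assume $0<p<1$ and $r_1>r'_1>r'_2>r_2$ (uniform winner with incongruent loser). Write $p'=1-p$. Then there exist $q\in(0,p)$ and $q'\in(0,p')$ such that, with $$x=\frac{(p-q)r_2+q'r'_2}{p-q+q'},\quad y=\frac{qr_2+(p'-q')r'_2}{q+p'-q'},\quad z=\frac{qr_1+q'r'_1}{q+q'},$$ one has $x<y\le z$, and the information structure that sends, when the CTR vector is $(r_1,r_2)$, signal $(r_1,x)$ with probability $p-q$ and $(z,y)$ with probability $q$, and, when the CTR vector is $(r'_1,r'_2)$, signal $(z,x)$ with probability $q'$ and $(r'_1,y)$ with probability $p'-q'$, is calibrated, partially bundles both bidders (so is interior), and has revenue strictly larger than both full disclosure and no disclosure.
   Context: Setting. Two bidders with values $v_1=v_2=1$. The CTR vector equals $(r_1,r_2)$ with probability $p$ and $(r'_1,r'_2)$ with probability $1-p$, all entries in $[0,1]$, labeled so that $r_1\ge r'_1,r_2,r'_2$. An information structure is a finitely supported probability distribution on pairs $(r,s)\in[0,1]^2\times[0,1]^2$ whose $r$-marginal is this prior (the probabilities above are joint probabilities of (CTR vector, signal)). Given signals $s$, the winner $i^*$ maximizes $s_i$ (uniform tie-breaking), pays per click $s_j/s_{i^*}$ with $j\ne i^*$ (revenue $0$ if $s_{i^*}=0$), only upon a click, which occurs with probability $r_{i^*}$; revenue is $\mathbb{E}[r_{i^*}p_{i^*}]$. Calibrated: $\mathbb{E}[r_i\mid s_i=t]=t$ for every $i$ and every $t$ with $\Pr[s_i=t]>0$.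 Full disclosure: $s=r$ a.s.; no disclosure: $s_i=\mathbb{E}[r_i]$ a.s. Bidder $i$ is unbundled if $s_i=r_i$ a.s., fully bundled if $s_i=\mathbb{E}[r_i]$ a.s., and partially bundled otherwise; a structure is interior if both bidders are partially bundled. *)

theory Defs
  imports Complex_Main
begin

text \<open>A CTR vector / signal vector for two bidders is a pair of reals.
  A point of an information structure is a pair (r, s) of a CTR vector r and a
  signal vector s. An information structure is represented by its (joint)
  probability mass function on such points, required to have finite support.\<close>

type_synonym vec2 = "real \<times> real"
type_synonym point = "vec2 \<times> vec2"
type_synonym dist = "point \<Rightarrow> real"

definition comp :: "nat \<Rightarrow> vec2 \<Rightarrow> real" where
  "comp i v = (if i = 1 then fst v else snd v)"

definition supp :: "dist \<Rightarrow> point set" where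
  "supp \<mu> = {w. \<mu> w \<noteq> 0}"

definition prior :: "real \<Rightarrow> vec2 \<Rightarrow> vec2 \<Rightarrow> vec2 \<Rightarrow> real" where
  "prior p R R' r = (if r = R then p else 0) + (if r = R' then 1 - p else 0)"

definition in01 :: "vec2 \<Rightarrow> bool" where
  "in01 v \<longleftrightarrow> fst v \<in> {0..1} \<and> snd v \<in> {0..1}"

definition is_info_structure :: "(vec2 \<Rightarrow> real) \<Rightarrow> dist \<Rightarrow> bool" where
  "is_info_structure P \<mu> \<longleftrightarrow>
     finite (supp \<mu>) \<and> (\<forall>w. 0 \<le> \<mu> w) \<and>
     (\<forall>w\<in>supp \<mu>. in01 (fst w) \<and> in01 (snd w)) \<and>
     (\<forall>r. (\<Sum>w\<in>supp \<mu>. if fst w = r then \<mu> w else 0) = P r)"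

definition Ectr :: "dist \<Rightarrow> nat \<Rightarrow> real" where
  "Ectr \<mu> i = (\<Sum>w\<in>supp \<mu>. \<mu> w * comp i (fst w))"

definition calibrated :: "dist \<Rightarrow> bool" where
  "calibrated \<mu> \<longleftrightarrow>
     (\<forall>i\<in>{1,2::nat}. \<forall>t.
        (\<Sum>w\<in>supp \<mu>. if comp i (snd w) = t then \<mu> w else 0) > 0 \<longrightarrow>
        (\<Sum>w\<in>supp \<mu>. if comp i (snd w) = t then \<mu> w * comp i (fst w) else 0)
          = t * (\<Sum>w\<in>supp \<mu>. if comp i (snd w) = t then \<mu> w else 0))"

definition unbundled :: "dist \<Rightarrow> nat \<Rightarrow> bool" where
  "unbundled \<mu> i \<longleftrightarrow> (\<forall>w\<in>supp \<mu>. comp i (snd w) = comp i (fst w))"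

definition fully_bundled :: "dist \<Rightarrow> nat \<Rightarrow> bool" where
  "fully_bundled \<mu> i \<longleftrightarrow> (\<forall>w\<in>supp \<mu>. comp i (snd w) = Ectr \<mu> i)"

definition partially_bundled :: "dist \<Rightarrow> nat \<Rightarrow> bool" where
  "partially_bundled \<mu> i \<longleftrightarrow> \<not> unbundled \<mu> i \<and> \<not> fully_bundled \<mu> i"

definition interior :: "dist \<Rightarrow> bool" where
  "interior \<mu> \<longleftrightarrow> partially_bundled \<mu> 1 \<and> partially_bundled \<mu> 2"

text \<open>Expected payment of bidder i if it wins at point w: per-click price
  s_j / s_i (0 if s_i = 0) times click probability r_i.\<close>
definition pay :: "nat \<Rightarrow> point \<Rightarrow> real" where
  "pay i w = (let j = (if i = 1 then 2 else 1 :: nat) in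
     if comp i (snd w) = 0 then 0
     else comp i (fst w) * (comp j (snd w) / comp i (snd w)))"

definition point_rev :: "point \<Rightarrow> real" where
  "point_rev w =
     (if fst (snd w) > snd (snd w) then pay 1 w
      else if snd (snd w) > fst (snd w) then pay 2 w
      else (pay 1 w + pay 2 w) / 2)"

definition revenue :: "dist \<Rightarrow> real" where
  "revenue \<mu> = (\<Sum>w\<in>supp \<mu>. \<mu> w * point_rev w)"

definition full_disclosure :: "(vec2 \<Rightarrow> real) \<Rightarrow> dist" where
  "full_disclosure P w = (if snd w = fst w then P (fst w) else 0)"

definition prior_mean :: "(vec2 \<Rightarrow> real) \<Rightarrow> nat \<Rightarrow> real" where
  "prior_mean P i = (\<Sum>r\<in>{r. P r \<noteq> 0}. P r * comp i r)"

definition no_disclosure :: "(vec2 \<Rightarrow> real) \<Rightarrow> dist" where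
  "no_disclosure P w =
     (if snd w = (prior_mean P 1, prior_mean P 2) then P (fst w) else 0)"

definition delta :: "point \<Rightarrow> real \<Rightarrow> dist" where
  "delta a m w = (if w = a then m else 0)"

end

theory Submission
  imports Defs
begin

lemma core:
  fixes p q q' r1 r2 r1' r2' x y z :: real
  assumes hp: "0 < q" "q < p" "0 < q'" "q' < 1 - p"
    and hr: "r1 > r1'" "r1' > r2'" "r2' > r2" "0 \<le> r2" "r1 \<le> 1"
    and hx: "x = ((p - q) * r2 + q' * r2') / (p - q + q')"
    and hy: "y = (q * r2 + (1 - p - q') * r2') / (q + (1 - p) - q')"
    and hz: "z = (q * r1 + q' * r1') / (q + q')"
    and xy: "x < y"
  shows "x < y \<and> y \<le> z \<and>
        is_info_structure (prior p (r1, r2) (r1', r2')) (\<lambda>w. delta ((r1, r2), (r1, x)) (p - q) w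
                + delta ((r1, r2), (z, y)) q w
                + delta ((r1', r2'), (z, x)) q' w
                + delta ((r1', r2'), (r1', y)) (1 - p - q') w) \<and>
        calibrated (\<lambda>w. delta ((r1, r2), (r1, x)) (p - q) w
                + delta ((r1, r2), (z, y)) q w
                + delta ((r1', r2'), (z, x)) q' w
                + delta ((r1', r2'), (r1', y)) (1 - p - q') w) \<and>
        partially_bundled (\<lambda>w. delta ((r1, r2), (r1, x)) (p - q) w
                + delta ((r1, r2), (z, y)) q w
                + delta ((r1', r2'), (z, x)) q' w
                + delta ((r1', r2'), (r1', y)) (1 - p - q') w) 1 \<and>
        partially_bundled (\<lambda>w. delta ((r1, r2), (r1, x)) (p - q) w
                + delta ((r1, r2), (z, y)) q w
                + delta ((r1', r2'), (z, x)) q' w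
                + delta ((r1', r2'), (r1', y)) (1 - p - q') w) 2 \<and>
        interior (\<lambda>w. delta ((r1, r2), (r1, x)) (p - q) w
                + delta ((r1, r2), (z, y)) q w
                + delta ((r1', r2'), (z, x)) q' w
                + delta ((r1', r2'), (r1', y)) (1 - p - q') w) \<and>
        revenue (\<lambda>w. delta ((r1, r2), (r1, x)) (p - q) w
                + delta ((r1, r2), (z, y)) q w
                + delta ((r1', r2'), (z, x)) q' w
                + delta ((r1', r2'), (r1', y)) (1 - p - q') w) > revenue (full_disclosure (prior p (r1, r2) (r1', r2'))) \<and>
        revenue (\<lambda>w. delta ((r1, r2), (r1, x)) (p - q) w
                + delta ((r1, r2), (z, y)) q w
                + delta ((r1', r2'), (z, x)) q' w
                + delta ((r1', r2'), (r1', y)) (1 - p - q') w) > revenue (no_disclosure (prior p (r1, r2) (r1', r2')))"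
proof -
  define \<mu> where "\<mu> = (\<lambda>w. delta ((r1, r2), (r1, x)) (p - q) w
                + delta ((r1, r2), (z, y)) q w
                + delta ((r1', r2'), (z, x)) q' w
                + delta ((r1', r2'), (r1', y)) (1 - p - q') w)"
  define P where "P = prior p (r1, r2) (r1', r2')"
  define A where "A = ((r1, r2), (r1, x))"
  define B where "B = ((r1, r2), (z, y))"
  define C where "C = ((r1', r2'), (z, x))"
  define D where "D = ((r1', r2'), (r1', y))"
  have m1: "p - q > 0" "1 - p - q' > 0" "p - q + q' > 0" "q + (1 - p) - q' > 0" "q + q' > 0"
    using hp by auto
  have ex: "(p - q + q') * x = (p - q) * r2 + q' * r2'" using hx m1 by simp
  have ey: "(q + (1 - p) - q') * y = q * r2 + (1 - p - q') * r2'" using hy m1 by simp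
  have ez: "(q + q') * z = q * r1 + q' * r1'" using hz m1 by simp
  have z1: "z < r1"
  proof -
    have "(q + q') * z < (q + q') * r1" using ez hp hr by (simp add: algebra_simps)
    thus ?thesis using m1 by simp
  qed
  have z2: "r1' < z"
  proof -
    have "(q + q') * z > (q + q') * r1'" using ez hp hr by (simp add: algebra_simps)
    thus ?thesis using m1 by simp
  qed
  have x1: "r2 < x"
  proof -
    have "(p - q + q') * x > (p - q + q') * r2" using ex hp hr m1 by (simp add: algebra_simps)
    thus ?thesis using m1 by simp
  qed
  have y2: "y < r2'"
  proof -
    have "(q + (1 - p) - q') * y < (q + (1 - p) - q') * r2'" using ey hp hr m1 by (simp add: algebra_simps)
    thus ?thesis using m1(4) mult_less_cancel_left_pos by blast
  qed
  have pos: "r1 > 0" "r1' > 0" "z > 0" using hr z2 by auto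
  have dist: "A \<noteq> B" "A \<noteq> C" "A \<noteq> D" "B \<noteq> C" "B \<noteq> D" "C \<noteq> D"
    using z1 z2 hr xy unfolding A_def B_def C_def D_def by auto
  have mA: "\<mu> A = p - q" and mB: "\<mu> B = q" and mC: "\<mu> C = q'" and mD: "\<mu> D = 1 - p - q'"
    using dist unfolding \<mu>_def delta_def A_def[symmetric] B_def[symmetric] C_def[symmetric] D_def[symmetric]
    by (auto simp: eq_commute)
  have suppmu: "supp \<mu> = {A, B, C, D}"
  proof
    show "supp \<mu> \<subseteq> {A, B, C, D}"
      unfolding supp_def \<mu>_def delta_def A_def[symmetric] B_def[symmetric] C_def[symmetric] D_def[symmetric]
      by auto
    show "{A, B, C, D} \<subseteq> supp \<mu>" unfolding supp_def using mA mB mC mD m1 hp by auto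
  qed
  have sum4: "\<And>f :: point \<Rightarrow> real. (\<Sum>w\<in>supp \<mu>. f w) = f A + f B + f C + f D"
    using dist by (simp add: suppmu add.assoc)
  have y1: "r2 < y" using x1 xy by simp
  have yz: "y \<le> z" using y2 z2 hr by simp
  have RR: "(r1, r2) \<noteq> (r1', r2')" using hr by auto
  have i1: "finite (supp \<mu>)" by (simp add: suppmu)
  have i2: "\<forall>w. 0 \<le> \<mu> w" unfolding \<mu>_def delta_def using m1 hp by auto
  have i3: "\<forall>w\<in>supp \<mu>. in01 (fst w) \<and> in01 (snd w)"
    unfolding suppmu A_def B_def C_def D_def in01_def using hr x1 y1 xy y2 z1 z2 by auto
  have i4: "\<forall>r. (\<Sum>w\<in>supp \<mu>. if fst w = r then \<mu> w else 0) = P r"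
    unfolding sum4 mA mB mC mD unfolding A_def B_def C_def D_def P_def prior_def
    using RR by auto
  have info: "is_info_structure P \<mu>"
    unfolding is_info_structure_def using i1 i2 i3 i4 by blast
  have cal: "calibrated \<mu>"
    unfolding calibrated_def
  proof (intro ballI allI impI)
    fix i :: nat and t assume "i \<in> {1,2}"
    then consider "i = 1" | "i = 2" by auto
    thus "(\<Sum>w\<in>supp \<mu>. if comp i (snd w) = t then \<mu> w * comp i (fst w) else 0) =
       t * (\<Sum>w\<in>supp \<mu>. if comp i (snd w) = t then \<mu> w else 0)"
    proof cases
      case 1
      show ?thesis unfolding sum4 mA mB mC mD unfolding A_def B_def C_def D_def 1 comp_def
        using z1 z2 hr ez
        by (cases "t = r1"; cases "t = z"; cases "t = r1'") (auto simp: algebra_simps)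
    next
      case 2
      show ?thesis unfolding sum4 mA mB mC mD unfolding A_def B_def C_def D_def 2 comp_def
        using xy ex ey
        by (cases "t = x"; cases "t = y") (auto simp: algebra_simps)
    qed
  qed
  have inA: "A \<in> supp \<mu>" "B \<in> supp \<mu>" "C \<in> supp \<mu>" "D \<in> supp \<mu>" by (auto simp: suppmu)
  have pb1: "partially_bundled \<mu> 1"
    unfolding partially_bundled_def unbundled_def fully_bundled_def
  proof
    show "\<not> (\<forall>w\<in>supp \<mu>. comp 1 (snd w) = comp 1 (fst w))"
      using inA(2) z1 unfolding B_def comp_def by force
    show "\<not> (\<forall>w\<in>supp \<mu>. comp 1 (snd w) = Ectr \<mu> 1)"
    proof
      assume h: "\<forall>w\<in>supp \<mu>. comp 1 (snd w) = Ectr \<mu> 1"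
      have "comp 1 (snd A) = Ectr \<mu> 1" "comp 1 (snd D) = Ectr \<mu> 1" using h inA by auto
      thus False using hr unfolding A_def D_def comp_def by simp
    qed
  qed
  have pb2: "partially_bundled \<mu> 2"
    unfolding partially_bundled_def unbundled_def fully_bundled_def
  proof
    show "\<not> (\<forall>w\<in>supp \<mu>. comp 2 (snd w) = comp 2 (fst w))"
      using inA(1) x1 unfolding A_def comp_def by force
    show "\<not> (\<forall>w\<in>supp \<mu>. comp 2 (snd w) = Ectr \<mu> 2)"
    proof
      assume h: "\<forall>w\<in>supp \<mu>. comp 2 (snd w) = Ectr \<mu> 2"
      have "comp 2 (snd A) = Ectr \<mu> 2" "comp 2 (snd B) = Ectr \<mu> 2" using h inA by auto
      thus False using xy unfolding A_def B_def comp_def by simp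
    qed
  qed
  define m2 where "m2 = p * r2 + (1 - p) * r2'"
  have revmu: "revenue \<mu> = (p-q)*x + q*(r1*(y/z)) + q'*(r1'*(x/z)) + (1-p-q')*y"
    unfolding revenue_def sum4 mA mB mC mD unfolding A_def B_def C_def D_def point_rev_def pay_def comp_def
    using hr xy x1 y2 z1 z2 pos by (simp add: Let_def)
  have key: "(q+q')*(q*r1*y + q'*r1'*x - z*(q'*x+q*y)) = q*q'*(r1-r1')*(y-x)"
  proof -
    have "(q+q')*(q*r1*y + q'*r1'*x - z*(q'*x+q*y)) = (q+q')*(q*r1*y + q'*r1'*x) - ((q+q')*z)*(q'*x+q*y)"
      by (simp add: algebra_simps)
    also have "\<dots> = q*q'*(r1-r1')*(y-x)" unfolding ez by (simp add: algebra_simps)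
    finally show ?thesis .
  qed
  have kpos: "q*r1*y + q'*r1'*x - z*(q'*x+q*y) > 0"
  proof -
    have "q*q'*(r1-r1')*(y-x) > 0" using hp hr xy by simp
    hence "(q+q')*(q*r1*y + q'*r1'*x - z*(q'*x+q*y)) > 0" using key by simp
    thus ?thesis using m1(5) by (simp add: zero_less_mult_iff)
  qed
  have m2eq: "m2 = (p-q+q')*x + (q + (1-p) - q')*y" unfolding ex ey m2_def by (simp add: algebra_simps)
  have rev_gt: "revenue \<mu> > m2"
  proof -
    have "revenue \<mu> - m2 = (q*r1*y + q'*r1'*x - z*(q'*x+q*y)) / z"
      unfolding revmu m2eq using pos by (simp add: field_simps)
    moreover have "(q*r1*y + q'*r1'*x - z*(q'*x+q*y)) / z > 0" using kpos pos by simp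
    ultimately show ?thesis by linarith
  qed
  have PR: "P (r1,r2) = p" "P (r1',r2') = 1 - p" using RR unfolding P_def prior_def by auto
  have Pz: "\<And>r. r \<noteq> (r1,r2) \<Longrightarrow> r \<noteq> (r1',r2') \<Longrightarrow> P r = 0" unfolding P_def prior_def by auto
  have pp: "0 < p" "p < 1" using hp by auto
  have Pnz: "\<And>r. P r \<noteq> 0 \<longleftrightarrow> r = (r1,r2) \<or> r = (r1',r2')"
  proof -
    fix r show "P r \<noteq> 0 \<longleftrightarrow> r = (r1,r2) \<or> r = (r1',r2')"
      using PR Pz[of r] pp by (cases "r = (r1,r2)"; cases "r = (r1',r2')") auto
  qed
  have suppF: "supp (full_disclosure P) = {((r1,r2),(r1,r2)), ((r1',r2'),(r1',r2'))}"
    unfolding supp_def full_disclosure_def using Pnz by force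
  have revF: "revenue (full_disclosure P) = m2"
    unfolding revenue_def suppF using RR hr pos PR
    by (simp add: full_disclosure_def point_rev_def pay_def comp_def m2_def)
  have PS: "{r. P r \<noteq> 0} = {(r1,r2),(r1',r2')}" using Pnz by auto
  define n1 where "n1 = p * r1 + (1 - p) * r1'"
  have pm: "prior_mean P 1 = n1" "prior_mean P 2 = m2"
    unfolding prior_mean_def PS using RR PR by (simp_all add: comp_def n1_def m2_def)
  have n1m2: "n1 > m2" "m2 > 0" "n1 > 0"
  proof -
    have "p * r1 > p * r2" "(1-p)*r1' > (1-p)*r2'" using hp hr by auto
    thus "n1 > m2" unfolding n1_def m2_def by simp
    have "p * r2 \<ge> 0" "(1-p)*r2' > 0" using hp hr by auto
    thus "m2 > 0" unfolding m2_def by simp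
    with \<open>n1 > m2\<close> show "n1 > 0" by simp
  qed
  have suppN: "supp (no_disclosure P) = {((r1,r2),(n1,m2)), ((r1',r2'),(n1,m2))}"
    unfolding supp_def no_disclosure_def pm using Pnz by force
  have revN: "revenue (no_disclosure P) = m2"
  proof -
    have "revenue (no_disclosure P) = p*(r1*(m2/n1)) + (1-p)*(r1'*(m2/n1))"
      unfolding revenue_def suppN using RR n1m2 PR
      by (simp add: no_disclosure_def pm pm(1)[simplified] point_rev_def pay_def comp_def)
    also have "\<dots> = m2 * n1 / n1" unfolding n1_def by (simp add: algebra_simps add_divide_distrib[symmetric] diff_divide_distrib[symmetric])
    also have "\<dots> = m2" using n1m2 by simp
    finally show ?thesis .
  qed
  show ?thesis
    unfolding \<mu>_def[symmetric] P_def[symmetric]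
    using xy yz info cal pb1 pb2 rev_gt revF revN unfolding interior_def by simp
qed

theorem mainTheorem10:
  fixes p r1 r2 r1' r2' :: real
  assumes "0 < p" "p < 1"
    and "r1 > r1'" "r1' > r2'" "r2' > r2"
    and "0 \<le> r2" "r1 \<le> 1"
  shows "\<exists>q q'. 0 < q \<and> q < p \<and> 0 < q' \<and> q' < 1 - p \<and>
    (let p' = 1 - p;
         x = ((p - q) * r2 + q' * r2') / (p - q + q');
         y = (q * r2 + (p' - q') * r2') / (q + p' - q');
         z = (q * r1 + q' * r1') / (q + q');
         P = prior p (r1, r2) (r1', r2');
         \<mu> = (\<lambda>w. delta ((r1, r2), (r1, x)) (p - q) w
                + delta ((r1, r2), (z, y)) q w
                + delta ((r1', r2'), (z, x)) q' w
                + delta ((r1', r2'), (r1', y)) (p' - q') w)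
     in x < y \<and> y \<le> z \<and>
        is_info_structure P \<mu> \<and> calibrated \<mu> \<and>
        partially_bundled \<mu> 1 \<and> partially_bundled \<mu> 2 \<and> interior \<mu> \<and>
        revenue \<mu> > revenue (full_disclosure P) \<and>
        revenue \<mu> > revenue (no_disclosure P))"
proof -
  define q :: real where "q = p / 2"
  define q' :: real where "q' = (1 - p) / 4"
  have hq: "0 < q" "q < p" "0 < q'" "q' < 1 - p" using assms unfolding q_def q'_def by auto
  have d1: "p - q + q' > 0" "q + (1 - p) - q' > 0" using hq by auto
  have key: "((p - q) * r2 + q' * r2') * (q + (1 - p) - q') < (q * r2 + (1 - p - q') * r2') * (p - q + q')"
  proof -
    have "(q * r2 + (1 - p - q') * r2') * (p - q + q') - ((p - q) * r2 + q' * r2') * (q + (1 - p) - q')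
        = p * (1 - p) / 4 * (r2' - r2)"
      unfolding q_def q'_def by (simp add: field_simps)
    moreover have "p * (1 - p) / 4 * (r2' - r2) > 0" using assms by simp
    ultimately show ?thesis by linarith
  qed
  have xy: "((p - q) * r2 + q' * r2') / (p - q + q') < (q * r2 + (1 - p - q') * r2') / (q + (1 - p) - q')"
    using key d1 by (simp add: divide_less_eq less_divide_eq mult.commute)
  show ?thesis
    apply (rule exI[of _ q], rule exI[of _ q'])
    apply (intro conjI hq)
    unfolding Let_def
    apply (rule core[OF hq assms(3-7) refl refl refl])
    using xy by simp
qed

end
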